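(* Let $\tau\in\mathcal{H}$ with $\Im(\tau)\ge\sqrt3/4$ and let $z\in\mathbb{C}$ with $0\le\Im(z)\le\Im(\tau)/4$. Then $$|\theta_{00}(z,\tau)-\theta_{01}(z,\tau)|<|\theta_{00}(z,\tau)+\theta_{01}(z,\tau)|;$$ consequently $\Re\left(\frac{\theta_{01}(z,\tau)}{\theta_{00}(z,\tau)}\right)>0$ and $\Re\left(\frac{\theta_{01}(0,\tau)}{\theta_{00}(0,\tau)}\right)>0$.
   Context: For $z\in\mathbb{C}$ and $\tau$ in the upper half-plane $\mathcal{H}=\{\tau\in\mathbb{C}:\Im\tau>0\}$, $\theta(z,\tau)=\sum_{n\in\mathbb{Z}}\exp(\pi i\tau n^2+2\pi i n z)$. Set $\theta_{00}(z,\tau)=\theta(z,\tau)$ and $\theta_{01}(z,\tau)=\theta(z+\tfrac12,\tau)$. (The paper states the hypothesis as $\Im\tau$ at least an unspecified constant which it notes is $\le\sqrt3/4$; here $\sqrt3/4$ is used.) *)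

theory Defs
  imports "HOL-Analysis.Analysis"
begin

definition jtheta :: "complex \<Rightarrow> complex \<Rightarrow> complex" where
  "jtheta z \<tau> = (\<Sum>\<^sub>\<infinity>n\<in>(UNIV::int set).
      exp (pi * \<i> * \<tau> * (of_int n)^2 + 2 * pi * \<i> * of_int n * z))"

definition theta00 :: "complex \<Rightarrow> complex \<Rightarrow> complex" where
  "theta00 z \<tau> = jtheta z \<tau>"

definition theta01 :: "complex \<Rightarrow> complex \<Rightarrow> complex" where
  "theta01 z \<tau> = jtheta (z + 1/2) \<tau>"

end

theory Submission
  imports Defs
begin

definition Mj :: "real \<Rightarrow> int \<Rightarrow> real" where
  "Mj a n = (if n = 0 then 1 else if n = 1 then exp(-a) else if n = -1 then exp(-a/2)
      else exp(-3*a/2) ^ nat \<bar>n\<bar>)"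

lemma Mj_nonneg: "Mj a n \<ge> 0" by (simp add: Mj_def)

lemma term_bound:
  fixes a b :: real and n :: int
  assumes a: "a \<ge> 0" and b: "0 \<le> b" "b \<le> a/2"
  shows "exp (-a * (of_int n)^2 - b * of_int n) \<le> Mj a n"
proof -
  consider "n = 0" | "n = 1" | "n = -1" | "\<bar>n\<bar> \<ge> 2" by linarith
  then show ?thesis
  proof cases
    case 4
    have e: "exp(-3*a/2) ^ nat \<bar>n\<bar> = exp (of_nat (nat \<bar>n\<bar>) * (-3*a/2))"
      by (rule exp_of_nat_mult[symmetric])
    have nn: "of_int (nat \<bar>n\<bar>) = \<bar>real_of_int n\<bar>" using 4 by simp
    have sq: "(real_of_int n)^2 \<ge> 2 * \<bar>real_of_int n\<bar>"
    proof -
      have h2: "\<bar>real_of_int n\<bar> \<ge> 2" using 4 by linarith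
      have "2*\<bar>real_of_int n\<bar> \<le> \<bar>real_of_int n\<bar> * \<bar>real_of_int n\<bar>"
        using mult_right_mono[OF h2, of "\<bar>real_of_int n\<bar>"] by simp
      then show ?thesis by (metis abs_mult_self_eq power2_eq_square)
    qed
    have "a * (real_of_int n)^2 \<ge> a * (2 * \<bar>real_of_int n\<bar>)" using sq a by (rule mult_left_mono)
    moreover have "- b * of_int n \<le> b * \<bar>real_of_int n\<bar>" using b by (simp add: abs_if)
    moreover have "b * \<bar>real_of_int n\<bar> \<le> a/2 * \<bar>real_of_int n\<bar>" using b mult_right_mono[of b "a/2" "\<bar>real_of_int n\<bar>"] by simp
    ultimately have "-a * (of_int n)^2 - b * of_int n \<le> real (nat \<bar>n\<bar>) * (-3*a/2)"
      using nn by (simp add: algebra_simps)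
    then have "exp (-a * (of_int n)^2 - b * of_int n) \<le> exp (real (nat \<bar>n\<bar>) * (-3*a/2))"
      by simp
    moreover have "n \<noteq> 0" "n \<noteq> 1" "n \<noteq> -1" using 4 by auto
    ultimately have "exp (-a * (of_int n)^2 - b * of_int n) \<le> exp(-3*a/2) ^ nat \<bar>n\<bar>"
      using e by simp
    also have "\<dots> = Mj a n" using \<open>n \<noteq> 0\<close> \<open>n \<noteq> 1\<close> \<open>n \<noteq> -1\<close> by (simp add: Mj_def)
    finally show ?thesis .
  qed (use b in \<open>auto simp: Mj_def\<close>)
qed

lemma geo2:
  fixes w :: real assumes "0 \<le> w" "w < 1"
  shows "((\<lambda>k::nat. w ^ (k+2)) has_sum (w^2/(1-w))) UNIV"
proof -
  have "(\<lambda>k. w^2 * w ^ k) sums (w^2 * (1/(1-w)))"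
    using geometric_sums[of w] assms by (intro sums_mult) auto
  moreover have "(\<lambda>k. w^2 * w ^ k) = (\<lambda>k::nat. w ^ (k+2))"
    by (simp add: power_add power2_eq_square mult_ac)
  ultimately have "(\<lambda>k::nat. w ^ (k+2)) sums (w^2/(1-w))"
    by simp
  then show ?thesis using assms by (intro sums_nonneg_imp_has_sum) auto
qed

lemma Mj_has_sum:
  fixes a :: real assumes a: "a > 0"
  defines "w \<equiv> exp(-3*a/2)"
  shows "(Mj a has_sum (1 + exp(-a) + exp(-a/2) + 2*(w^2/(1-w)))) UNIV"
proof -
  have w: "0 \<le> w" "w < 1" using a by (auto simp: w_def)
  define P where "P = range (\<lambda>k::nat. int k + 2)"
  define Q where "Q = range (\<lambda>k::nat. - int k - 2)"
  have hP: "(Mj a has_sum (w^2/(1-w))) P"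
    unfolding P_def
  proof (subst has_sum_reindex)
    show "inj (\<lambda>k::nat. int k + 2)" by (auto simp: inj_def)
    show "((Mj a \<circ> (\<lambda>k::nat. int k + 2)) has_sum (w^2/(1-w))) UNIV"
      using geo2[OF w] by (simp add: o_def Mj_def w_def nat_add_distrib)
  qed
  have hQ: "(Mj a has_sum (w^2/(1-w))) Q"
    unfolding Q_def
  proof (subst has_sum_reindex)
    show "inj (\<lambda>k::nat. - int k - 2)" by (auto simp: inj_def)
    have "\<And>k::nat. nat \<bar>- int k - 2\<bar> = k + 2" by simp
    then show "((Mj a \<circ> (\<lambda>k::nat. - int k - 2)) has_sum (w^2/(1-w))) UNIV"
      using geo2[OF w] by (simp add: o_def Mj_def w_def)
  qed
  have PQ: "P \<inter> Q = {}" by (auto simp: P_def Q_def)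
  have hPQ: "(Mj a has_sum (w^2/(1-w) + w^2/(1-w))) (P \<union> Q)"
    by (rule has_sum_Un_disjoint[OF hP hQ PQ])
  have fin: "(Mj a has_sum (1 + exp(-a) + exp(-a/2))) {-1,0,1}"
    by (rule has_sum_finiteI) (auto simp: Mj_def)
  have disj: "{-1,0,1} \<inter> (P \<union> Q) = {}" by (auto simp: P_def Q_def)
  have U: "{-1,0,1} \<union> (P \<union> Q) = UNIV"
  proof -
    { fix n :: int assume "n \<notin> {-1,0,1}"
      then have "n \<ge> 2 \<or> n \<le> -2" by auto
      then have "n \<in> P \<union> Q"
      proof
        assume "n \<ge> 2" then have "n = int (nat (n-2)) + 2" by simp
        then show ?thesis unfolding P_def by blast
      next
        assume "n \<le> -2" then have "n = - int (nat (-n-2)) - 2" by simp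
        then show ?thesis unfolding Q_def by blast
      qed }
    then show ?thesis by blast
  qed
  show ?thesis using has_sum_Un_disjoint[OF fin hPQ disj] unfolding U by (simp add: algebra_simps)
qed

lemma numeric:
  fixes a :: real assumes a: "a \<ge> pi * sqrt 3 / 4"
  shows "exp(-a) + exp(-a/2) + 2*(exp(-3*a/2)^2/(1-exp(-3*a/2))) < 1"
proof -
  define v where "v = exp(-a/2)"
  have s3: "sqrt 3 \<ge> 1.7" by (rule real_le_rsqrt) (simp add: power2_eq_square)
  have "pi * sqrt 3 \<ge> 3 * 1.7" using pi_gt3 s3 by (intro mult_mono) auto
  then have a1: "a/8 \<ge> 51/320" using a by simp
  have "exp (a/8) \<ge> 371/320" using exp_ge_add_one_self[of "a/8"] a1 by linarith
  then have "exp (a/8) ^ 4 \<ge> (371/320) ^ 4" by (rule power_mono) simp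
  moreover have "exp (a/8) ^ 4 = exp (a/2)" by (simp flip: exp_of_nat_mult)
  moreover have "(371/320::real) ^ 4 \<ge> 1.8" by (simp add: power_divide)
  ultimately have ea: "exp (a/2) \<ge> 1.8" by linarith
  have v0: "v > 0" by (simp add: v_def)
  have "v = 1 / exp(a/2)" by (simp add: v_def exp_minus field_simps)
  then have ve: "v * exp(a/2) = 1" by simp
  have "v * 9 \<le> v * (5 * exp(a/2))" using ea v0 by (intro mult_left_mono) auto
  then have v1: "v \<le> 5/9" using ve by (simp add: algebra_simps)
  have e1: "exp(-a) = v^2" by (simp add: v_def flip: exp_of_nat_mult)
  have e2: "exp(-3*a/2) = v^3" by (simp add: v_def flip: exp_of_nat_mult)
  have v3: "v^3 \<le> (5/9)^3" using v0 v1 by (intro power_mono) auto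
  have v6: "v^6 \<le> (5/9)^6" using v0 v1 by (intro power_mono) auto
  have d: "1 - v^3 \<ge> 1 - (5/9)^3" using v3 by simp
  have "2*((v^3)^2/(1-v^3)) \<le> 2*((5/9)^6/(1 - (5/9)^3))"
    using v6 d v0 by (intro mult_left_mono frac_le) (auto simp: power_divide simp flip: power_mult)
  moreover have "v^2 \<le> (5/9)^2" using v0 v1 by (intro power_mono) auto
  moreover have "2*((5/9::real)^6/(1 - (5/9)^3)) + (5/9)^2 + 5/9 < 1" by (simp add: power_divide)
  ultimately have "v^2 + v + 2*((v^3)^2/(1-v^3)) < 1" using v1 by linarith
  then show ?thesis unfolding e1 e2 v_def[symmetric] by simp
qed

lemma re_div_pos:
  fixes A B :: complex
  assumes "cmod (A - B) < cmod (A + B)"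
  shows "Re (B / A) > 0"
proof -
  have "cmod (A - B)^2 < cmod (A + B)^2" using assms by (intro power_strict_mono) auto
  then have "(Re A - Re B)^2 + (Im A - Im B)^2 < (Re A + Re B)^2 + (Im A + Im B)^2"
    by (simp add: cmod_power2)
  then have p: "Re A * Re B + Im A * Im B > 0" by (simp add: power2_eq_square algebra_simps)
  then have "A \<noteq> 0" by auto
  then have "cmod A ^2 > 0" by simp
  moreover have "Re(B/A) = (Re A*Re B + Im A*Im B)/cmod A^2"
    by (simp add: Re_divide cmod_power2 algebra_simps)
  ultimately show ?thesis using p by simp
qed

lemma sign_exp: "exp (\<i> * complex_of_real (pi * of_int n)) = (if even n then 1 else -1)"
proof -
  have "cis (pi * of_int n) = (if even n then 1 else -1)" by (simp add: complex_eq_iff)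
  then show ?thesis by (simp add: cis_conv_exp)
qed

lemma main_ineq:
  fixes z \<tau> :: complex
  assumes "Im \<tau> \<ge> sqrt 3 / 4"
    and "0 \<le> Im z" and "Im z \<le> Im \<tau> / 4"
  shows "cmod (theta00 z \<tau> - theta01 z \<tau>) < cmod (theta00 z \<tau> + theta01 z \<tau>)"
proof -
  define a where "a = pi * Im \<tau>"
  define b where "b = 2 * pi * Im z"
  have s3: "sqrt 3 > 0" by simp
  have apos: "a \<ge> pi * sqrt 3 / 4" using assms(1) by (simp add: a_def)
  then have a0: "a > 0" using s3 pi_gt_zero
    by (smt (verit) divide_pos_pos mult_pos_pos)
  have b0: "0 \<le> b" "b \<le> a/2" using assms by (auto simp: a_def b_def)
  define F where "F = (\<lambda>n::int. exp (pi * \<i> * \<tau> * (of_int n)^2 + 2 * pi * \<i> * of_int n * z))"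
  define E where "E = (\<lambda>n::int. if even n then (1::complex) else -1)"
  define w where "w = exp(-3*a/2)"
  define T where "T = 1 + exp(-a) + exp(-a/2) + 2*(w^2/(1-w))"
  have normF: "norm (F n) = exp (-a * (of_int n)^2 - b * of_int n)" for n
    by (simp add: F_def a_def b_def algebra_simps)
  have FM: "norm (F n) \<le> Mj a n" for n
    unfolding normF using term_bound[of a b n] a0 b0 by simp
  have hM: "(Mj a has_sum T) UNIV" unfolding T_def w_def using Mj_has_sum[OF a0] by simp
  have h2M: "((\<lambda>n. 2 * Mj a n) has_sum (2*T)) UNIV" using has_sum_cmult_right[OF hM] by simp
  have a2M: "(\<lambda>n. norm (2 * Mj a n)) summable_on UNIV"
    using h2M Mj_nonneg by (simp add: abs_mult summable_on_def) blast
  have aM: "(\<lambda>n. norm (Mj a n)) summable_on UNIV"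
    using hM Mj_nonneg by (simp add: summable_on_def) blast
  have EF: "exp (pi * \<i> * \<tau> * (of_int n)^2 + 2 * pi * \<i> * of_int n * (z + 1/2)) = F n * E n" for n
  proof -
    have "pi * \<i> * \<tau> * (of_int n)^2 + 2 * pi * \<i> * of_int n * (z + 1/2)
       = (pi * \<i> * \<tau> * (of_int n)^2 + 2 * pi * \<i> * of_int n * z) + \<i> * complex_of_real (pi * of_int n)"
      by (simp add: algebra_simps)
    then show ?thesis unfolding F_def E_def by (simp only: exp_add sign_exp)
  qed
  have t00: "theta00 z \<tau> = infsum F UNIV" by (simp add: theta00_def jtheta_def F_def)
  have t01: "theta01 z \<tau> = infsum (\<lambda>n. F n * E n) UNIV" unfolding theta01_def jtheta_def EF ..
  have nE: "norm (E n) \<le> 1" for n by (simp add: E_def)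
  have aF: "(\<lambda>n. norm (F n)) summable_on UNIV"
    by (rule Infinite_Sum.abs_summable_on_comparison_test[OF aM]) (use FM Mj_nonneg in auto)
  have aFE: "(\<lambda>n. norm (F n * E n)) summable_on UNIV"
    by (rule Infinite_Sum.abs_summable_on_comparison_test[OF aM]) (use FM Mj_nonneg in \<open>auto simp: E_def\<close>)
  define hp where "hp = (\<lambda>n. F n * (1 + E n))"
  define hm where "hm = (\<lambda>n. F n * (1 - E n))"
  have nhp: "norm (hp n) \<le> norm (2 * Mj a n)" for n
    using FM[of n] Mj_nonneg[of a n] by (auto simp: hp_def E_def norm_mult)
  have nhm: "norm (hm n) \<le> norm (2 * Mj a n)" for n
    using FM[of n] Mj_nonneg[of a n] by (auto simp: hm_def E_def norm_mult)
  have ahp: "(\<lambda>n. norm (hp n)) summable_on UNIV" by (rule Infinite_Sum.abs_summable_on_comparison_test[OF a2M nhp])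
  have ahm: "(\<lambda>n. norm (hm n)) summable_on UNIV" by (rule Infinite_Sum.abs_summable_on_comparison_test[OF a2M nhm])
  have sF: "F summable_on UNIV" by (rule abs_summable_summable[OF aF])
  have sFE: "(\<lambda>n. F n * E n) summable_on UNIV" by (rule abs_summable_summable[OF aFE])
  have plus: "theta00 z \<tau> + theta01 z \<tau> = infsum hp UNIV"
    unfolding t00 t01 hp_def using infsum_add[OF sF sFE] by (simp add: algebra_simps)
  have minus: "theta00 z \<tau> - theta01 z \<tau> = infsum hm UNIV"
    proof -
    have "(\<lambda>n. - (F n * E n)) summable_on UNIV" using sFE by (simp add: summable_on_uminus)
    then have "infsum (\<lambda>n. F n + - (F n * E n)) UNIV = infsum F UNIV + infsum (\<lambda>n. - (F n * E n)) UNIV"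
      using infsum_add[OF sF] by blast
    then show ?thesis unfolding t00 t01 hm_def by (simp add: infsum_uminus algebra_simps)
  qed
  define S where "S = UNIV - {0::int}"
  have shp: "hp summable_on S" using ahp abs_summable_summable summable_on_subset_banach by blast
  have shm: "hm summable_on S" using ahm abs_summable_summable summable_on_subset_banach by blast
  have ahpS: "(\<lambda>n. norm (hp n)) summable_on S" using ahp summable_on_subset_banach by blast
  have ahmS: "(\<lambda>n. norm (hm n)) summable_on S" using ahm summable_on_subset_banach by blast
  have aMS: "Mj a summable_on S" using hM summable_on_subset_banach summable_on_def by blast
  have F0: "F 0 = 1" by (simp add: F_def)
  have ins: "insert 0 S = UNIV" by (auto simp: S_def)
  have "infsum hp UNIV = hp 0 + infsum hp S"
    using has_sum_insert[of 0 S hp, OF _ has_sum_infsum[OF shp]] ins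
    by (metis DiffE S_def infsumI singletonI)
  then have P: "infsum hp UNIV = 2 + infsum hp S" by (simp add: hp_def E_def F0)
  have "infsum hm UNIV = hm 0 + infsum hm S"
    using has_sum_insert[of 0 S hm, OF _ has_sum_infsum[OF shm]] ins
    by (metis DiffE S_def infsumI singletonI)
  then have M: "infsum hm UNIV = infsum hm S" by (simp add: hm_def E_def)
  have "infsum (Mj a) UNIV = Mj a 0 + infsum (Mj a) S"
    using has_sum_insert[of 0 S "Mj a", OF _ has_sum_infsum[OF aMS]] ins
    by (metis DiffE S_def infsumI singletonI)
  then have MS: "infsum (Mj a) S = T - 1" using hM by (simp add: Mj_def infsumI)
  have T1: "T - 1 < 1" using numeric[OF apos] unfolding T_def w_def by simp
  have n1: "norm (infsum hp S) \<le> infsum (\<lambda>n. norm (hp n)) S" by (rule norm_infsum_bound[OF ahpS])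
  have n2: "norm (infsum hm S) \<le> infsum (\<lambda>n. norm (hm n)) S" by (rule norm_infsum_bound[OF ahmS])
  have "infsum (\<lambda>n. norm (hp n)) S + infsum (\<lambda>n. norm (hm n)) S
      = infsum (\<lambda>n. norm (hp n) + norm (hm n)) S"
    by (rule infsum_add[symmetric]) (use ahpS ahmS in auto)
  also have "\<dots> \<le> infsum (\<lambda>n. 2 * Mj a n) S"
  proof (rule infsum_mono)
    show "(\<lambda>n. norm (hp n) + norm (hm n)) summable_on S" using ahpS ahmS by (rule summable_on_add)
    show "(\<lambda>n. 2 * Mj a n) summable_on S" using aMS by (rule summable_on_cmult_right)
    fix n show "norm (hp n) + norm (hm n) \<le> 2 * Mj a n"
      using FM[of n] by (auto simp: hp_def hm_def E_def norm_mult)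
  qed
  also have "\<dots> = 2 * (T - 1)" using MS by (simp add: infsum_cmult_right')
  finally have s0: "infsum (\<lambda>n. norm (hp n)) S + infsum (\<lambda>n. norm (hm n)) S \<le> 2 * (T - 1)" .
  have sum: "norm (infsum hp S) + norm (infsum hm S) < 2"
  proof -
    have "norm (infsum hp S) + norm (infsum hm S) \<le> 2 * (T - 1)"
      by (rule order_trans[OF add_mono[OF n1 n2] s0])
    moreover have "2 * (T - 1) < 2" using T1 by simp
    ultimately show ?thesis by (rule le_less_trans)
  qed
  have "norm (2 + infsum hp S) \<ge> 2 - norm (infsum hp S)"
    using norm_diff_ineq[of "2::complex" "infsum hp S"] by simp
  then show ?thesis unfolding plus minus P M using sum by linarith
qed

theorem mainTheorem5:
  fixes z \<tau> :: complex
  assumes "Im \<tau> > 0"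
    and "Im \<tau> \<ge> sqrt 3 / 4"
    and "0 \<le> Im z" and "Im z \<le> Im \<tau> / 4"
  shows "cmod (theta00 z \<tau> - theta01 z \<tau>) < cmod (theta00 z \<tau> + theta01 z \<tau>)
    \<and> Re (theta01 z \<tau> / theta00 z \<tau>) > 0
    \<and> Re (theta01 0 \<tau> / theta00 0 \<tau>) > 0"
proof -
  have 1: "cmod (theta00 z \<tau> - theta01 z \<tau>) < cmod (theta00 z \<tau> + theta01 z \<tau>)"
    using main_ineq assms(2-4) by blast
  have 2: "cmod (theta00 0 \<tau> - theta01 0 \<tau>) < cmod (theta00 0 \<tau> + theta01 0 \<tau>)"
    using main_ineq[of \<tau> 0] assms(1,2) by simp
  show ?thesis using 1 2 re_div_pos by blast
qed

end
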